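(* Let $\eta_1,\eta_2$ be real functions and $f_1,f_2$ real functions with $\|f_1\|_\infty\le N$ and $\|f_2\|_\infty\le N$ for a constant $N$, and put $V_i=e^{f_i}$. Then $$K(\mathcal{P}_{\eta_1,V_1},\mathcal{P}_{\eta_2,V_2})\le(1+e^{2N})\big(\|\eta_1-\eta_2\|_n^2+\|f_1-f_2\|_n^2\big),$$ $$\mathrm{Var}(\mathcal{P}_{\eta_1,V_1},\mathcal{P}_{\eta_2,V_2})\le e^{4N}\big(\|\eta_1-\eta_2\|_n^2+\|f_1-f_2\|_n^2\big).$$
   Context: Let $Q$ be a probability measure on the covariate space $[0,1]^d$ and $\|\cdot\|_n$ the norm of $L_2(Q)$; $\|\cdot\|_\infty$ is the supremum norm. For functions $\eta$ and $V>0$ let $\mathcal{P}_{\eta,V}(y\mid x)=(2\pi V(x))^{-1/2}\exp(-(y-\eta(x))^2/(2V(x)))$. For fixed $x$ define $K_x(\mathcal{P}_1,\mathcal{P}_2)=\int\mathcal{P}_1\log(\mathcal{P}_1/\mathcal{P}_2)\,dy$ and $\mathrm{Var}_x(\mathcal{P}_1,\mathcal{P}_2)=\int\mathcal{P}_1\big(\log(\mathcal{P}_1/\mathcal{P}_2)-K_x(\mathcal{P}_1,\mathcal{P}_2)\big)^2\,dy$, and the averaged versions $K(\mathcal{P}_1,\mathcal{P}_2)=\int K_x(\mathcal{P}_1,\mathcal{P}_2)\,dQ(x)$ and $\mathrm{Var}(\mathcal{P}_1,\mathcal{P}_2)=\int\mathrm{Var}_x(\mathcal{P}_1,\mathcal{P}_2)\,dQ(x)$.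 *)

theory Defs
  imports "HOL-Probability.Probability"
begin

definition gauss_dens :: "real \<Rightarrow> real \<Rightarrow> real \<Rightarrow> real" where
  "gauss_dens m v y = exp (- ((y - m)^2) / (2 * v)) / sqrt (2 * pi * v)"

definition Pcond :: "('a \<Rightarrow> real) \<Rightarrow> ('a \<Rightarrow> real) \<Rightarrow> 'a \<Rightarrow> real \<Rightarrow> real" where
  "Pcond eta V x y = gauss_dens (eta x) (V x) y"

definition KL_x :: "(real \<Rightarrow> real) \<Rightarrow> (real \<Rightarrow> real) \<Rightarrow> real" where
  "KL_x p1 p2 = (\<integral>y. p1 y * ln (p1 y / p2 y) \<partial>lborel)"

definition Var_x :: "(real \<Rightarrow> real) \<Rightarrow> (real \<Rightarrow> real) \<Rightarrow> real" where
  "Var_x p1 p2 = (\<integral>y. p1 y * (ln (p1 y / p2 y) - KL_x p1 p2)^2 \<partial>lborel)"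

text \<open>Averaged versions (integrands are nonnegative; integrated as
  nonnegative Lebesgue integrals so that the value may be infinite).\<close>
definition KL_avg :: "'a measure \<Rightarrow> ('a \<Rightarrow> real \<Rightarrow> real) \<Rightarrow> ('a \<Rightarrow> real \<Rightarrow> real) \<Rightarrow> ennreal" where
  "KL_avg Q P1 P2 = (\<integral>\<^sup>+ x. ennreal (KL_x (P1 x) (P2 x)) \<partial>Q)"

definition Var_avg :: "'a measure \<Rightarrow> ('a \<Rightarrow> real \<Rightarrow> real) \<Rightarrow> ('a \<Rightarrow> real \<Rightarrow> real) \<Rightarrow> ennreal" where
  "Var_avg Q P1 P2 = (\<integral>\<^sup>+ x. ennreal (Var_x (P1 x) (P2 x)) \<partial>Q)"

definition L2Q_sq :: "'a measure \<Rightarrow> ('a \<Rightarrow> real) \<Rightarrow> ennreal" where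
  "L2Q_sq Q g = (\<integral>\<^sup>+ x. ennreal ((g x)^2) \<partial>Q)"

definition unit_cube :: "(real^'d) set" where
  "unit_cube = {x. \<forall>i. 0 \<le> x $ i \<and> x $ i \<le> 1}"

end

theory Submission
  imports Defs
begin


lemma poly_int:
  fixes \<sigma> :: real assumes s: "0 < \<sigma>"
  shows "(\<integral>y. normal_density \<mu> \<sigma> y * (a0 + a1*(y-\<mu>) + a2*(y-\<mu>)^2 + a3*(y-\<mu>)^3 + a4*(y-\<mu>)^4) \<partial>lborel)
     = a0 + a2*\<sigma>^2 + 3*a4*\<sigma>^4"
proof -
  let ?n = "normal_density \<mu> \<sigma>"
  have h0: "has_bochner_integral lborel (\<lambda>y. ?n y * a0) (1 * a0)"
    using normal_moment_even[OF s, of \<mu> 0] by (intro has_bochner_integral_mult_left) simp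
  have h1: "has_bochner_integral lborel (\<lambda>y. ?n y * (y-\<mu>) * a1) (0 * a1)"
    using normal_moment_odd[OF s, of \<mu> 0] by (intro has_bochner_integral_mult_left) simp
  have h2: "has_bochner_integral lborel (\<lambda>y. ?n y * (y-\<mu>)^2 * a2) (\<sigma>^2 * a2)"
    using normal_moment_even[OF s, of \<mu> 1] by (intro has_bochner_integral_mult_left) simp
  have h3: "has_bochner_integral lborel (\<lambda>y. ?n y * (y-\<mu>)^3 * a3) (0 * a3)"
    using normal_moment_odd[OF s, of \<mu> 1] by (intro has_bochner_integral_mult_left) (simp add: numeral_eq_Suc)
  have e4: "fact (2 * 2) / ((2 / \<sigma>\<^sup>2)^2 * fact 2) = 3*\<sigma>^4"
    using s by (simp add: fact_numeral field_simps power2_eq_square eval_nat_numeral)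
  have h4: "has_bochner_integral lborel (\<lambda>y. ?n y * (y-\<mu>)^4 * a4) (3*\<sigma>^4 * a4)"
    using normal_moment_even[OF s, of \<mu> 2] e4 by (intro has_bochner_integral_mult_left) simp
  have "has_bochner_integral lborel (\<lambda>y. ?n y * a0 + ?n y * (y-\<mu>) * a1 + ?n y * (y-\<mu>)^2 * a2
     + ?n y * (y-\<mu>)^3 * a3 + ?n y * (y-\<mu>)^4 * a4) (1*a0 + 0*a1 + \<sigma>^2*a2 + 0*a3 + 3*\<sigma>^4*a4)"
    by (intro has_bochner_integral_add h0 h1 h2 h3 h4)
  then have "has_bochner_integral lborel (\<lambda>y. ?n y * (a0 + a1*(y-\<mu>) + a2*(y-\<mu>)^2 + a3*(y-\<mu>)^3 + a4*(y-\<mu>)^4))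
     (a0 + a2*\<sigma>^2 + 3*a4*\<sigma>^4)"
    by (simp add: algebra_simps)
  then show ?thesis by (rule has_bochner_integral_integral_eq)
qed

lemma ln_gauss:
  assumes "v > 0"
  shows "ln (gauss_dens m v y) = - ((y - m)^2 / (2 * v)) - (ln (2 * pi) + ln v) / 2"
  using assms by (simp add: gauss_dens_def ln_div ln_sqrt ln_mult)

lemma gauss_nd: assumes "v > 0" shows "gauss_dens m v y = normal_density m (sqrt v) y"
  using assms by (simp add: gauss_dens_def normal_density_def)

lemma gauss_pos: assumes "v > 0" shows "gauss_dens m v y > 0"
  using assms by (simp add: gauss_dens_def)


lemma L_form:
  assumes v1: "v1 > 0" and v2: "v2 > 0"
  shows "ln (gauss_dens m1 v1 y / gauss_dens m2 v2 y)
    = ((m1-m2)^2/(2* v2) + (ln v2 - ln v1)/2) + ((m1-m2)/v2) * (y - m1) + (1/(2* v2) - 1/(2* v1)) * (y-m1)^2"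
proof -
  have "ln (gauss_dens m1 v1 y / gauss_dens m2 v2 y) = ln (gauss_dens m1 v1 y) - ln (gauss_dens m2 v2 y)"
    using gauss_pos[OF v1] gauss_pos[OF v2] by (rule ln_divide_pos)
  also have "\<dots> = (- ((y - m1)^2 / (2 * v1)) + (y - m2)^2 / (2 * v2)) + (ln v2 - ln v1) / 2"
    using v1 v2 by (simp add: ln_gauss algebra_simps diff_divide_distrib add_divide_distrib)
  also have "- ((y - m1)^2 / (2 * v1)) + (y - m2)^2 / (2 * v2) = (m1-m2)^2/(2* v2) + ((m1-m2)/v2) * (y - m1) + (1/(2* v2) - 1/(2* v1)) * (y-m1)^2"
    using v1 v2 by (simp add: field_simps power2_eq_square)
  finally show ?thesis by simp
qed

lemma KL_gauss:
  assumes v1: "v1 > 0" and v2: "v2 > 0"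
  shows "KL_x (gauss_dens m1 v1) (gauss_dens m2 v2) = (m1-m2)^2/(2* v2) + (ln v2 - ln v1)/2 + (v1/v2 - 1)/2"
proof -
  have "KL_x (gauss_dens m1 v1) (gauss_dens m2 v2) = (\<integral>y. normal_density m1 (sqrt v1) y *
     (((m1-m2)^2/(2* v2) + (ln v2 - ln v1)/2) + ((m1-m2)/v2) * (y - m1) + (1/(2* v2) - 1/(2* v1)) * (y-m1)^2
      + 0 * (y-m1)^3 + 0 * (y-m1)^4) \<partial>lborel)"
    unfolding KL_x_def
    by (intro Bochner_Integration.integral_cong refl, simp only: L_form[OF v1 v2]) (simp add: gauss_nd[OF v1])
  also have "\<dots> = (m1-m2)^2/(2* v2) + (ln v2 - ln v1)/2 + (1/(2* v2) - 1/(2* v1)) * (sqrt v1)^2"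
    using v1 by (subst poly_int) auto
  also have "\<dots> = (m1-m2)^2/(2* v2) + (ln v2 - ln v1)/2 + (v1/v2 - 1)/2"
    using v1 v2 by (simp add: field_simps)
  finally show ?thesis .
qed

lemma poly_sq:
  fixes B C t v1 :: real
  shows "(B*t + C*(t^2 - v1))^2 = (C* v1)^2 + (-2*B*C* v1) * t + (B^2 - 2*C^2* v1) * t^2
      + (2*B*C) * t^3 + C^2 * t^4"
  by (simp add: power2_eq_square eval_nat_numeral algebra_simps)

lemma Var_gauss:
  assumes v1: "v1 > 0" and v2: "v2 > 0"
  shows "Var_x (gauss_dens m1 v1) (gauss_dens m2 v2) = (m1-m2)^2 * v1 / v2^2 + (v1/v2 - 1)^2/2"
proof -
  define A where "A = (m1-m2)^2/(2* v2) + (ln v2 - ln v1)/2"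
  define B where "B = (m1-m2)/v2"
  define C where "C = 1/(2* v2) - 1/(2* v1)"
  have K: "KL_x (gauss_dens m1 v1) (gauss_dens m2 v2) = A + C * v1"
    unfolding KL_gauss[OF v1 v2] A_def C_def using v1 v2 by (simp add: field_simps)
  have LK: "ln (gauss_dens m1 v1 y / gauss_dens m2 v2 y) - (A + C * v1) = B*(y-m1) + C*((y-m1)^2 - v1)" for y
    unfolding L_form[OF v1 v2] A_def[symmetric] B_def[symmetric] C_def[symmetric]
    by (simp add: algebra_simps)
  have "Var_x (gauss_dens m1 v1) (gauss_dens m2 v2) = (\<integral>y. normal_density m1 (sqrt v1) y *
     ((C* v1)^2 + (-2*B*C* v1) * (y - m1) + (B^2 - 2*C^2* v1) * (y-m1)^2
      + (2*B*C) * (y-m1)^3 + C^2 * (y-m1)^4) \<partial>lborel)"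
    unfolding Var_x_def K
    by (intro Bochner_Integration.integral_cong refl, simp only: LK poly_sq, simp only: gauss_nd[OF v1])
  also have "\<dots> = (C* v1)^2 + (B^2 - 2*C^2* v1) * v1 + 3 * C^2 * v1^2"
  proof -
    have "sqrt v1 ^ 4 = (sqrt v1 ^ 2)^2" by (simp flip: power_mult)
    then have s4: "sqrt v1 ^ 4 = v1^2" using v1 by simp
    show ?thesis using v1 s4 by (subst poly_int) auto
  qed
  also have "\<dots> = (m1-m2)^2 * v1 / v2^2 + (v1/v2 - 1)^2/2"
    using v1 v2 by (simp add: B_def C_def field_simps power2_eq_square)
  finally show ?thesis .
qed

lemma exp_m1_abs:
  fixes d :: real
  shows "\<bar>exp d - 1\<bar> \<le> \<bar>d\<bar> * exp \<bar>d\<bar>"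
proof (cases "d \<ge> 0")
  case True
  have "exp (-d) \<ge> 1 + (-d)" using exp_ge_add_one_self[of "-d"] by simp
  then have "exp (-d) * exp d \<ge> (1 - d) * exp d" by (intro mult_right_mono) auto
  then have "1 \<ge> (1 - d) * exp d" by (simp add: exp_minus field_simps)
  moreover have "exp d \<ge> 1" using True by simp
  ultimately show ?thesis using True by (simp add: algebra_simps)
next
  case False
  have "exp d \<le> 1" using False by simp
  have "1 - exp d \<le> -d" using exp_ge_add_one_self[of d] by linarith
  then have "\<bar>exp d - 1\<bar> \<le> \<bar>d\<bar>" using \<open>exp d \<le> 1\<close> False by linarith
  also have "\<dots> \<le> \<bar>d\<bar> * exp \<bar>d\<bar>" by (simp add: mult_le_cancel_left1)
  finally show ?thesis .
qed

lemma exp_m1_m: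
  fixes d :: real
  shows "exp d - 1 - d \<le> d^2 * exp \<bar>d\<bar>"
proof -
  have "exp 0 \<ge> exp d + exp d * (0 - d)"
  proof -
    have "exp (-d) \<ge> 1 + (-d)" using exp_ge_add_one_self[of "-d"] by simp
    then have "exp (-d) * exp d \<ge> (1 - d) * exp d" by (intro mult_right_mono) auto
    then show ?thesis by (simp add: exp_minus field_simps)
  qed
  then have "exp d - 1 - d \<le> d * (exp d - 1)" by (simp add: algebra_simps)
  also have "\<dots> \<le> \<bar>d\<bar> * \<bar>exp d - 1\<bar>" by (metis abs_ge_self abs_mult)
  also have "\<dots> \<le> \<bar>d\<bar> * (\<bar>d\<bar> * exp \<bar>d\<bar>)" by (intro mult_left_mono exp_m1_abs) auto
  also have "\<dots> = d^2 * exp \<bar>d\<bar>" by (simp add: power2_eq_square)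
  finally show ?thesis .
qed

lemma lin_helper:
  fixes a b c e :: real
  shows "a \<le> b \<Longrightarrow> c \<le> e \<Longrightarrow> 0 \<le> b \<Longrightarrow> 0 \<le> e \<Longrightarrow> a/2 + c/2 \<le> b + e"
  by linarith

lemma lin_helper2:
  fixes a b c e :: real
  shows "a \<le> b \<Longrightarrow> c/2 \<le> e \<Longrightarrow> a + c/2 \<le> b + e"
  by linarith

lemma kl_alg:
  fixes X E a b R :: real
  shows "E \<noteq> 0 \<Longrightarrow> X/(2*E) + (b - a)/2 + (R - 1)/2 = X*(1/E)/2 + (R - 1 - (a-b))/2"
  by (simp add: field_simps)

lemma KL_pt:
  assumes "\<bar>f1\<bar> \<le> N" "\<bar>f2\<bar> \<le> N"
  shows "KL_x (gauss_dens m1 (exp f1)) (gauss_dens m2 (exp f2)) \<le> (1 + exp (2*N)) * ((m1-m2)^2 + (f1-f2)^2)"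
proof -
  define d where "d = f1 - f2"
  have dN: "\<bar>d\<bar> \<le> 2*N" using assms d_def by auto
  have e1: "exp (-f2) = 1 / exp f2" by (simp add: exp_minus inverse_eq_divide)
  have e2: "exp d = exp f1 / exp f2" by (simp add: d_def exp_diff)
  have "KL_x (gauss_dens m1 (exp f1)) (gauss_dens m2 (exp f2)) = (m1-m2)^2 * exp (-f2) / 2 + (exp d - 1 - d)/2"
    unfolding KL_gauss[OF exp_gt_zero exp_gt_zero] ln_exp e1 e2
    unfolding d_def by (rule kl_alg) simp
  also have "\<dots> \<le> (m1-m2)^2 * (1 + exp (2*N)) + d^2 * exp (2*N)"
  proof -
    have "exp (-f2) \<le> exp N" using assms by simp
    also have "exp N \<le> 1 + exp (2*N)"
    proof -
      have "N \<ge> 0" using assms by linarith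
      then have "exp N \<le> exp (2*N)" by simp
      then show ?thesis by linarith
    qed
    finally have a: "(m1-m2)^2 * exp (-f2) \<le> (m1-m2)^2 * (1 + exp (2*N))" by (rule mult_left_mono) simp
    have "exp d - 1 - d \<le> d^2 * exp \<bar>d\<bar>" by (rule exp_m1_m)
    also have "\<dots> \<le> d^2 * exp (2*N)" using dN by (intro mult_left_mono) auto
    finally have b: "exp d - 1 - d \<le> d^2 * exp (2*N)" .
    show ?thesis by (rule lin_helper[OF a b]) (simp_all add: add_nonneg_nonneg)
  qed
  also have "\<dots> \<le> (1 + exp (2*N)) * ((m1-m2)^2 + (f1-f2)^2)"
    by (simp add: d_def algebra_simps)
  finally show ?thesis .
qed

lemma var_alg:
  fixes x a b r :: real
  shows "x * a / b^2 + r = x * (a / (b * b)) + r"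
  by (simp add: power2_eq_square)

lemma Var_pt:
  assumes "\<bar>f1\<bar> \<le> N" "\<bar>f2\<bar> \<le> N"
  shows "Var_x (gauss_dens m1 (exp f1)) (gauss_dens m2 (exp f2)) \<le> exp (4*N) * ((m1-m2)^2 + (f1-f2)^2)"
proof -
  define d where "d = f1 - f2"
  have dN: "\<bar>d\<bar> \<le> 2*N" using assms d_def by auto
  have e: "exp (f1 - 2*f2) = exp f1 / (exp f2 * exp f2)"
  proof -
    have "f1 - 2*f2 = f1 - (f2+f2)" by simp
    then show ?thesis by (simp only: exp_diff exp_add)
  qed
  have e2: "exp d = exp f1 / exp f2" by (simp add: d_def exp_diff)
  have "Var_x (gauss_dens m1 (exp f1)) (gauss_dens m2 (exp f2)) = (m1-m2)^2 * exp (f1 - 2*f2) + (exp d - 1)^2/2"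
    unfolding Var_gauss[OF exp_gt_zero exp_gt_zero] e e2
    by (rule var_alg)
  also have "\<dots> \<le> (m1-m2)^2 * exp (4*N) + d^2 * exp (4*N)"
  proof -
    have "exp (f1 - 2*f2) \<le> exp (4*N)" using assms by simp
    then have a: "(m1-m2)^2 * exp (f1 - 2*f2) \<le> (m1-m2)^2 * exp (4*N)" by (rule mult_left_mono) simp
    have "exp \<bar>d\<bar> \<le> exp (2*N)" using dN by simp
    then have "\<bar>d\<bar> * exp \<bar>d\<bar> \<le> \<bar>d\<bar> * exp (2*N)" by (rule mult_left_mono) simp
    then have "\<bar>exp d - 1\<bar> \<le> \<bar>d\<bar> * exp (2*N)"
      using exp_m1_abs[of d] by (rule order_trans[rotated])
    then have "\<bar>exp d - 1\<bar>^2 \<le> (\<bar>d\<bar> * exp (2*N))^2"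
      by (rule power_mono) simp
    then have "(exp d - 1)^2 \<le> (\<bar>d\<bar> * exp (2*N))^2" by simp
    also have "\<dots> = d^2 * (exp (2*N))^2" by (simp add: power_mult_distrib)
    also have "(exp (2*N))^2 = exp (4*N)"
    proof -
      have "(exp (2*N))^2 = exp (2*N + 2*N)" by (simp only: power2_eq_square exp_add)
      also have "2*N + 2*N = 4*N" by simp
      finally show ?thesis .
    qed
    finally have b0: "(exp d - 1)^2 \<le> d^2 * exp (4*N)" .
    have "0 \<le> d^2 * exp (4*N)" by simp
    with b0 have b: "(exp d - 1)^2/2 \<le> d^2 * exp (4*N)" by linarith
    show ?thesis using a b by (rule lin_helper2)
  qed
  also have "\<dots> = exp (4*N) * ((m1-m2)^2 + (f1-f2)^2)"
    unfolding d_def by (simp add: algebra_simps)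
  finally show ?thesis .
qed

lemma Pcond_eq: "Pcond eta V x = gauss_dens (eta x) (V x)"
  by (rule ext) (simp add: Pcond_def)

lemma avg_bound:
  fixes Q :: "'a measure" and c :: real
  assumes c: "c \<ge> 0"
    and m: "g1 \<in> borel_measurable Q" "g2 \<in> borel_measurable Q"
    and pt: "\<And>x. x \<in> space Q \<Longrightarrow> F x \<le> c * ((g1 x)^2 + (g2 x)^2)"
  shows "(\<integral>\<^sup>+ x. ennreal (F x) \<partial>Q) \<le> ennreal c * ((\<integral>\<^sup>+ x. ennreal ((g1 x)^2) \<partial>Q) + (\<integral>\<^sup>+ x. ennreal ((g2 x)^2) \<partial>Q))"
proof -
  note [measurable] = m
  have "(\<integral>\<^sup>+ x. ennreal (F x) \<partial>Q) \<le> (\<integral>\<^sup>+ x. ennreal c * (ennreal ((g1 x)^2) + ennreal ((g2 x)^2)) \<partial>Q)"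
  proof (rule nn_integral_mono)
    fix x assume x: "x \<in> space Q"
    have "ennreal (F x) \<le> ennreal (c * ((g1 x)^2 + (g2 x)^2))" by (rule ennreal_leI) (rule pt[OF x])
    also have "\<dots> = ennreal c * ennreal ((g1 x)^2 + (g2 x)^2)" by (rule ennreal_mult) (use c in auto)
    also have "ennreal ((g1 x)^2 + (g2 x)^2) = ennreal ((g1 x)^2) + ennreal ((g2 x)^2)" by (rule ennreal_plus) auto
    finally show "ennreal (F x) \<le> ennreal c * (ennreal ((g1 x)^2) + ennreal ((g2 x)^2))" .
  qed
  also have "\<dots> = ennreal c * (\<integral>\<^sup>+ x. (ennreal ((g1 x)^2) + ennreal ((g2 x)^2)) \<partial>Q)"
    using m by (intro nn_integral_cmult) auto
  also have "(\<integral>\<^sup>+ x. (ennreal ((g1 x)^2) + ennreal ((g2 x)^2)) \<partial>Q) = (\<integral>\<^sup>+ x. ennreal ((g1 x)^2) \<partial>Q) + (\<integral>\<^sup>+ x. ennreal ((g2 x)^2) \<partial>Q)"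
    using m by (intro nn_integral_add) auto
  finally show ?thesis .
qed

theorem lemma2:
  fixes Q :: "(real^'d) measure"
    and eta1 eta2 f1 f2 :: "real^'d \<Rightarrow> real"
    and N :: real
  assumes "prob_space Q"
    and "space Q = unit_cube"
    and "eta1 \<in> borel_measurable Q" and "eta2 \<in> borel_measurable Q"
    and "f1 \<in> borel_measurable Q" and "f2 \<in> borel_measurable Q"
    and "\<forall>x\<in>unit_cube. \<bar>f1 x\<bar> \<le> N"
    and "\<forall>x\<in>unit_cube. \<bar>f2 x\<bar> \<le> N"
  shows "KL_avg Q (Pcond eta1 (\<lambda>x. exp (f1 x))) (Pcond eta2 (\<lambda>x. exp (f2 x)))
           \<le> ennreal (1 + exp (2 * N)) *
             (L2Q_sq Q (\<lambda>x. eta1 x - eta2 x) + L2Q_sq Q (\<lambda>x. f1 x - f2 x))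
       \<and> Var_avg Q (Pcond eta1 (\<lambda>x. exp (f1 x))) (Pcond eta2 (\<lambda>x. exp (f2 x)))
           \<le> ennreal (exp (4 * N)) *
             (L2Q_sq Q (\<lambda>x. eta1 x - eta2 x) + L2Q_sq Q (\<lambda>x. f1 x - f2 x))"
proof
  have m1: "(\<lambda>x. eta1 x - eta2 x) \<in> borel_measurable Q" using assms(3,4) by measurable
  have m2: "(\<lambda>x. f1 x - f2 x) \<in> borel_measurable Q" using assms(5,6) by measurable
  show "KL_avg Q (Pcond eta1 (\<lambda>x. exp (f1 x))) (Pcond eta2 (\<lambda>x. exp (f2 x)))
           \<le> ennreal (1 + exp (2 * N)) *
             (L2Q_sq Q (\<lambda>x. eta1 x - eta2 x) + L2Q_sq Q (\<lambda>x. f1 x - f2 x))"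
    unfolding KL_avg_def L2Q_sq_def Pcond_eq
    by (rule avg_bound[OF _ m1 m2], simp add: add_nonneg_nonneg)
       (use assms(2,7,8) in \<open>auto intro!: KL_pt\<close>)
  show "Var_avg Q (Pcond eta1 (\<lambda>x. exp (f1 x))) (Pcond eta2 (\<lambda>x. exp (f2 x)))
           \<le> ennreal (exp (4 * N)) *
             (L2Q_sq Q (\<lambda>x. eta1 x - eta2 x) + L2Q_sq Q (\<lambda>x. f1 x - f2 x))"
    unfolding Var_avg_def L2Q_sq_def Pcond_eq
    by (rule avg_bound[OF _ m1 m2], simp)
       (use assms(2,7,8) in \<open>auto intro!: Var_pt\<close>)
qed

end
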